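(* Fix $x,y>0$. As a function of the pair $(r,s)$, the extended mean value $E(r,s;x,y)$ is Schur-concave on $[0,\infty)\times[0,\infty)$ and Schur-convex on $(-\infty,0]\times(-\infty,0]$.
   Context: For $x,y>0$ and $r,s\in\mathbb{R}$ the extended mean values are defined by $E(r,s;x,y)=\bigl(\frac{r}{s}\cdot\frac{y^s-x^s}{y^r-x^r}\bigr)^{1/(s-r)}$ if $rs(r-s)(x-y)\neq0$; $E(r,0;x,y)=E(0,r;x,y)=\bigl(\frac1r\cdot\frac{y^r-x^r}{\ln y-\ln x}\bigr)^{1/r}$ if $r(x-y)\neq0$; $E(r,r;x,y)=e^{-1/r}\bigl(\frac{x^{x^r}}{y^{y^r}}\bigr)^{1/(x^r-y^r)}$ if $r(x-y)\neq0$; $E(0,0;x,y)=\sqrt{xy}$ if $x\neq y$; $E(r,s;x,x)=x$. A function $f$ of two real variables defined on $I\times I$ ($I$ an interval) is Schur-convex if $f(r,s)\le f(r',s')$ whenever $(r,s),(r',s')\in I^2$ satisfy $(r,s)\prec(r',s')$, meaning $r+s=r'+s'$ and $\max\{r,s\}\le\max\{r',s'\}$; $f$ is Schur-concave if $-f$ is Schur-convex. *)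

theory Defs
  imports "HOL-Analysis.Analysis"
begin

definition ext_mean :: "real \<Rightarrow> real \<Rightarrow> real \<Rightarrow> real \<Rightarrow> real" where
  "ext_mean r s x y =
    (if x = y then x
     else if r \<noteq> 0 \<and> s \<noteq> 0 \<and> r \<noteq> s then
       ((r / s) * ((y powr s - x powr s) / (y powr r - x powr r))) powr (1 / (s - r))
     else if r \<noteq> 0 \<and> s = 0 then
       ((1 / r) * ((y powr r - x powr r) / (ln y - ln x))) powr (1 / r)
     else if r = 0 \<and> s \<noteq> 0 then
       ((1 / s) * ((y powr s - x powr s) / (ln y - ln x))) powr (1 / s)
     else if r = s \<and> r \<noteq> 0 then
       exp (- 1 / r) * ((x powr (x powr r) / y powr (y powr r)) powr (1 / (x powr r - y powr r)))
     else sqrt (x * y))"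

definition majorized2 :: "real \<times> real \<Rightarrow> real \<times> real \<Rightarrow> bool" where
  "majorized2 p q \<longleftrightarrow> fst p + snd p = fst q + snd q \<and> max (fst p) (snd p) \<le> max (fst q) (snd q)"

definition schur_convex_on :: "real set \<Rightarrow> (real \<Rightarrow> real \<Rightarrow> real) \<Rightarrow> bool" where
  "schur_convex_on I f \<longleftrightarrow>
     (\<forall>r\<in>I. \<forall>s\<in>I. \<forall>r'\<in>I. \<forall>s'\<in>I. majorized2 (r, s) (r', s') \<longrightarrow> f r s \<le> f r' s')"

definition schur_concave_on :: "real set \<Rightarrow> (real \<Rightarrow> real \<Rightarrow> real) \<Rightarrow> bool" where
  "schur_concave_on I f \<longleftrightarrow> schur_convex_on I (\<lambda>r s. - f r s)"

end

theory Submission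
  imports Defs
begin

lemma mono_cont:
  fixes f f' :: "real \<Rightarrow> real"
  assumes ab: "a \<le> b" and cont: "continuous_on {a..b} f"
    and der: "\<And>x. a < x \<Longrightarrow> x < b \<Longrightarrow> (f has_real_derivative f' x) (at x)"
    and nn: "\<And>x. a < x \<Longrightarrow> x < b \<Longrightarrow> f' x \<ge> 0"
  shows "f a \<le> f b"
proof (cases "a = b")
  case True then show ?thesis by simp
next
  case False
  then have "a < b" using ab by simp
  from MVT[OF this cont] der obtain l z where
    z: "a < z" "z < b" "DERIV f z :> l" "f b - f a = (b - a) * l"
    using real_differentiable_def by blast
  have "l = f' z" using DERIV_unique[OF z(3) der[OF z(1,2)]] .
  with nn[OF z(1,2)] z(4) ab show ?thesis
    by (smt (verit) mult_nonneg_nonneg)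
qed

lemma k_ineq:
  fixes t :: real assumes "t \<ge> 0"
  shows "2*t + t * cosh t - 3 * sinh t \<ge> 0"
proof -
  have k2: "t * cosh t - sinh t \<ge> 0" if "t \<ge> 0" for t :: real
  proof -
    have "(\<lambda>t. t * cosh t - sinh t) 0 \<le> (\<lambda>t. t * cosh t - sinh t) t"
      apply (rule DERIV_nonneg_imp_nondecreasing[OF that])
      subgoal for x
        apply (rule exI[where x="x * sinh x"])
        by (auto intro!: derivative_eq_intros)
      done
    then show ?thesis by simp
  qed
  have k1: "2 - 2 * cosh t + t * sinh t \<ge> 0" if "t \<ge> 0" for t :: real
  proof -
    have "(\<lambda>t. 2 - 2 * cosh t + t * sinh t) 0 \<le> (\<lambda>t. 2 - 2 * cosh t + t * sinh t) t"
      apply (rule DERIV_nonneg_imp_nondecreasing[OF that])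
      subgoal for x
        apply (rule exI[where x="x * cosh x - sinh x"])
        using k2[of x] by (auto intro!: derivative_eq_intros)
      done
    then show ?thesis by simp
  qed
  have "(\<lambda>t. 2*t + t * cosh t - 3 * sinh t) 0 \<le> (\<lambda>t. 2*t + t * cosh t - 3 * sinh t) t"
    apply (rule DERIV_nonneg_imp_nondecreasing[OF assms])
    subgoal for x
      apply (rule exI[where x="2 - 2 * cosh x + x * sinh x"])
      using k1[of x] by (auto intro!: derivative_eq_intros)
    done
  then show ?thesis by simp
qed

definition S :: "real \<Rightarrow> real" where
  "S z = (if z = 0 then 1 else sinh z / z)"
definition psi :: "real \<Rightarrow> real" where
  "psi z = ln (S z)"
definition Dp :: "real \<Rightarrow> real" where
  "Dp z = (if z = 0 then 0 else cosh z / sinh z - 1 / z)"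
definition D2 :: "real \<Rightarrow> real" where
  "D2 z = 1 / z^2 - 1 / (sinh z)^2"
definition D3 :: "real \<Rightarrow> real" where
  "D3 z = - 2 / z^3 + 2 * cosh z / (sinh z)^3"

lemma S_pos: "S z > 0"
proof (cases "z = 0")
  case False
  then show ?thesis unfolding S_def
    by (cases "z > 0") (auto simp: divide_pos_pos divide_neg_neg)
qed (simp add: S_def)

lemma S_even: "S (- z) = S z"
  by (simp add: S_def)

lemma psi_even: "psi (- z) = psi z"
  by (simp add: psi_def S_even)

lemma Dp_odd: "Dp (- z) = - Dp z"
  by (simp add: Dp_def)

lemma psi_deriv:
  assumes "z > 0" shows "(psi has_real_derivative Dp z) (at z)"
proof -
  have "((\<lambda>t. ln (sinh t / t)) has_real_derivative Dp z) (at z)"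
    using assms
    apply (auto intro!: derivative_eq_intros simp: Dp_def)
    apply (auto simp: field_simps power2_eq_square)
    done
  then show ?thesis
    apply (rule has_field_derivative_transform_within_open[where S="{0<..}"])
    using assms by (auto simp: psi_def S_def)
qed

lemma Dp_deriv:
  assumes "z > 0" shows "(Dp has_real_derivative D2 z) (at z)"
proof -
  have "((\<lambda>t. cosh t / sinh t - 1 / t) has_real_derivative D2 z) (at z)"
    using assms
    apply (auto intro!: derivative_eq_intros simp: D2_def)
    apply (auto simp: field_simps power2_eq_square)
    using cosh_square_eq[of z] by (simp add: power2_eq_square algebra_simps)
  then show ?thesis
    apply (rule has_field_derivative_transform_within_open[where S="{0<..}"])
    using assms by (auto simp: Dp_def)
qed

lemma D2_deriv:
  assumes "z > 0" shows "(D2 has_real_derivative D3 z) (at z)"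
  unfolding D2_def D3_def using assms
  apply (auto intro!: derivative_eq_intros)
  apply (auto simp: field_simps power2_eq_square power3_eq_cube)
  by algebra

lemma psi_cont0: "isCont psi 0"
proof -
  have "(sinh has_real_derivative 1) (at 0)"
    using has_field_derivative_sinh[of "\<lambda>x. x" 1 0] by (auto intro: DERIV_ident)
  then have "((\<lambda>t::real. (sinh t - sinh 0) / (t - 0)) \<longlongrightarrow> 1) (at 0)"
    by (simp add: has_field_derivative_iff)
  then have "((\<lambda>t::real. sinh t / t) \<longlongrightarrow> 1) (at 0)" by simp
  then have "(S \<longlongrightarrow> 1) (at 0)"
    by (rule tendsto_cong[THEN iffD1, rotated]) (auto simp: S_def eventually_at_filter)
  then have "(psi \<longlongrightarrow> ln 1) (at 0)"
    unfolding psi_def by (intro tendsto_ln) auto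
  then show ?thesis by (simp add: isCont_def psi_def S_def)
qed

lemma psi_cont: "z \<ge> 0 \<Longrightarrow> isCont psi z"
proof (cases "z = 0")
  case False
  assume "z \<ge> 0"
  with False have "z > 0" by simp
  then show ?thesis using psi_deriv DERIV_isCont by blast
qed (simp add: psi_cont0)

lemma psi_cont_on: "A \<subseteq> {0..} \<Longrightarrow> continuous_on A psi"
  by (meson atLeast_iff continuous_at_imp_continuous_on psi_cont subsetD)


lemma aux_ineq:
  fixes z :: real assumes z: "z > 0"
  shows "3 * Dp z - sinh z / cosh z \<ge> 0"
proof -
  have k: "0 \<le> 2*(2*z) + (2*z) * cosh (2*z) - 3 * sinh (2*z)"
    using k_ineq[of "2*z"] z by simp
  have cs: "cosh z ^ 2 = sinh z ^ 2 + 1" by (rule cosh_square_eq)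
  have "2*(2*z) + (2*z) * cosh (2*z) - 3 * sinh (2*z)
      = 2 * (3*z* cosh z^2 - 3* sinh z* cosh z - z* sinh z^2)"
    unfolding sinh_double cosh_double by (simp add: algebra_simps cs)
  with k have n: "0 \<le> 3*z* cosh z^2 - 3* sinh z* cosh z - z* sinh z^2" by simp
  have sp: "sinh z > 0" using z by simp
  have "3 * Dp z - sinh z / cosh z
      = (3*z* cosh z^2 - 3* sinh z* cosh z - z* sinh z^2) / (z * sinh z * cosh z)"
    using z sp by (simp add: Dp_def field_simps power2_eq_square)
  also have "\<dots> \<ge> 0" using n z sp by (intro divide_nonneg_pos) auto
  finally show ?thesis .
qed

lemma lazarevic:
  fixes z :: real assumes z: "z > 0"
  shows "z^3 * cosh z \<le> sinh z ^ 3"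
proof -
  let ?f = "\<lambda>t. 3 * psi t - ln (cosh t)"
  have "?f 0 \<le> ?f z"
  proof (rule mono_cont[where f = "\<lambda>t. 3 * psi t - ln (cosh t)" and f' = "\<lambda>t. 3 * Dp t - sinh t / cosh t"])
    show "continuous_on {0..z} ?f"
      by (auto intro!: continuous_intros psi_cont_on)
  next
    fix x assume x: "0 < x" "x < z"
    show "(?f has_real_derivative 3 * Dp x - sinh x / cosh x) (at x)"
      using x by (auto intro!: derivative_eq_intros psi_deriv)
    show "0 \<le> 3 * Dp x - sinh x / cosh x" using aux_ineq x by simp
  qed (use z in auto) 
  then have "ln (cosh z) \<le> 3 * ln (S z)" by (simp add: psi_def S_def)
  also have "\<dots> = ln (S z ^ 3)" using S_pos by (simp add: ln_realpow)
  finally have "cosh z \<le> S z ^ 3" using S_pos by simp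
  then have "cosh z \<le> (sinh z / z)^3" using z by (simp add: S_def)
  then show ?thesis using z by (simp add: field_simps power_divide)
qed

lemma D3_nonpos: "z > 0 \<Longrightarrow> D3 z \<le> 0"
  using lazarevic[of z]
  by (simp add: D3_def field_simps)

lemma D2_antimono:
  assumes "0 < u" "u \<le> v" shows "D2 v \<le> D2 u"
  apply (rule DERIV_nonpos_imp_nonincreasing[OF assms(2)])
  subgoal for x using assms D2_deriv[of x] D3_nonpos[of x] by auto
  done


lemma psi_chain:
  assumes "(f has_real_derivative f') (at x)" "f x > 0" "D = Dp (f x) * f'"
  shows "((\<lambda>t. psi (f t)) has_real_derivative D) (at x)"
  using DERIV_chain2[OF psi_deriv[OF assms(2)] assms(1)] assms(3) by simp

lemma Dp_chain:
  assumes "(f has_real_derivative f') (at x)" "f x > 0" "D = D2 (f x) * f'"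
  shows "((\<lambda>t. Dp (f t)) has_real_derivative D) (at x)"
  using DERIV_chain2[OF Dp_deriv[OF assms(2)] assms(1)] assms(3) by simp

definition P :: "real \<Rightarrow> real \<Rightarrow> real" where
  "P u v = (if u = v then Dp u else (psi v - psi u) / (v - u))"

lemma P_sym: "P u v = P v u"
  by (simp add: P_def divide_simps) (simp add: field_simps)

lemma P_odd: "P (- u) (- v) = - P u v"
  by (auto simp: P_def psi_even Dp_odd divide_simps) (simp add: field_simps)

lemma key:
  assumes d: "0 \<le> d" "d \<le> d'" "d' \<le> m"
  shows "P (m - d') (m + d') \<le> P (m - d) (m + d)"
proof (cases "d = d'")
  case True then show ?thesis by simp
next
  case False
  with d have dd: "d < d'" by simp
  with d have m: "m > 0" by simp
  define G where "G = (\<lambda>t. psi (m + t) - psi (m - t))"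
  define G1 where "G1 = (\<lambda>t. Dp (m + t) + Dp (m - t))"
  define G2 where "G2 = (\<lambda>t. D2 (m + t) - D2 (m - t))"
  have DG: "(G has_real_derivative G1 t) (at t)" if "0 \<le> t" "t < m" for t
    unfolding G_def G1_def using that m
    by (auto intro!: derivative_eq_intros psi_chain)
  have DG1: "(G1 has_real_derivative G2 t) (at t)" if "0 \<le> t" "t < m" for t
    unfolding G1_def G2_def using that m
    by (auto intro!: derivative_eq_intros Dp_chain)
  have G2n: "G2 t \<le> 0" if "0 \<le> t" "t < m" for t
    unfolding G2_def using D2_antimono[of "m - t" "m + t"] that by simp
  have G1anti: "G1 t2 \<le> G1 t1" if "0 \<le> t1" "t1 \<le> t2" "t2 < m" for t1 t2
    apply (rule DERIV_nonpos_imp_nonincreasing[OF that(2)])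
    subgoal for x using that DG1[of x] G2n[of x] by auto
    done
  have c1: "continuous_on {0..m} (\<lambda>x. psi (m + x))"
    by (rule continuous_on_compose2[OF psi_cont_on[of "{0..}"]]) (auto intro!: continuous_intros)
  have c2: "continuous_on {0..m} (\<lambda>x. psi (m - x))"
    by (rule continuous_on_compose2[OF psi_cont_on[of "{0..}"]]) (auto intro!: continuous_intros)
  have Gcont: "continuous_on {0..m} G"
    unfolding G_def by (intro continuous_intros c1 c2)
  have G0: "G 0 = 0" by (simp add: G_def)
  have Pt: "P (m - t) (m + t) = G t / (2 * t)" if "t > 0" for t
    using that by (simp add: P_def G_def)
  show ?thesis
  proof (cases "d = 0")
    case True
    have "(\<lambda>t. 2 * t * Dp m - G t) 0 \<le> (\<lambda>t. 2 * t * Dp m - G t) d'"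
    proof (rule mono_cont[where f = "\<lambda>t. 2 * t * Dp m - G t" and f' = "\<lambda>t. 2 * Dp m - G1 t"])
      show "continuous_on {0..d'} (\<lambda>t. 2 * t * Dp m - G t)"
        using continuous_on_subset[OF Gcont, of "{0..d'}"] d
        by (auto intro!: continuous_intros)
    next
      fix x assume x: "0 < x" "x < d'"
      show "((\<lambda>t. 2 * t * Dp m - G t) has_real_derivative 2 * Dp m - G1 x) (at x)"
        using x d by (auto intro!: derivative_eq_intros DG)
      show "0 \<le> 2 * Dp m - G1 x"
        using G1anti[of 0 x] x d by (simp add: G1_def)
    qed (use dd True in auto)
    then have "G d' \<le> 2 * d' * Dp m" using G0 by simp
    then have "G d' / (2 * d') \<le> Dp m" using dd True by (simp add: divide_simps mult.commute)
    then show ?thesis using Pt[of d'] dd True by (simp add: P_def)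
  next
    case False
    with d have dpos: "d > 0" by simp
    have Qn: "0 \<le> G t - t * G1 t" if "0 \<le> t" "t < m" for t
    proof -
      have "(\<lambda>t. G t - t * G1 t) 0 \<le> (\<lambda>t. G t - t * G1 t) t"
        apply (rule DERIV_nonneg_imp_nondecreasing[OF that(1)])
        subgoal for x
          apply (rule exI[where x = "- x * G2 x"])
          using that DG[of x] DG1[of x] G2n[of x]
          by (auto intro!: derivative_eq_intros simp: mult_nonneg_nonpos)
        done
      then show ?thesis using G0 by simp
    qed
    have "(\<lambda>t. - (G t / t)) d \<le> (\<lambda>t. - (G t / t)) d'"
    proof (rule mono_cont[where f = "\<lambda>t. - (G t / t)" and f' = "\<lambda>t. (G t - t * G1 t) / t^2"])
      show "continuous_on {d..d'} (\<lambda>t. - (G t / t))"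
        using continuous_on_subset[OF Gcont, of "{d..d'}"] d dpos
        by (auto intro!: continuous_intros)
    next
      fix x assume x: "d < x" "x < d'"
      show "((\<lambda>t. - (G t / t)) has_real_derivative (G x - x * G1 x) / x^2) (at x)"
      proof -
        have xx: "0 \<le> x" "x < m" "x \<noteq> 0" using x d dpos by auto
        have h: "((\<lambda>t. G t / t) has_real_derivative (G1 x * x - G x * 1)/(x*x)) (at x)"
          using DERIV_divide[OF DG[OF xx(1,2)] DERIV_ident] xx by simp
        have eq: "(G x - x * G1 x) / x^2 = - ((G1 x * x - G x * 1)/(x*x))"
          using xx by (simp add: field_simps power2_eq_square)
        show ?thesis unfolding eq using DERIV_minus[OF h] .
      qed
      show "0 \<le> (G x - x * G1 x) / x^2"
        using Qn[of x] x d dpos by simp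
    qed (use dd in auto)
    then have "G d' / d' \<le> G d / d" by simp
    then have "G d' / (2 * d') \<le> G d / (2 * d)" by (simp add: divide_simps)
      (use dd dpos in \<open>simp add: field_simps\<close>)
    then show ?thesis using Pt[of d] Pt[of d'] dd dpos by simp
  qed
qed


lemma powr_exp': "exp (a::real) powr t = exp (t * a)"
  by (simp add: powr_def)

lemma ediff: "exp (t*(c+h)) - exp (t*(c-h)) = 2 * exp (t*c) * sinh (t*h :: real)"
proof -
  have 1: "exp (t*(c+h)) = exp (t*c) * exp (t*h)" by (simp add: distrib_left exp_add)
  have 2: "exp (t*(c-h)) = exp (t*c) * exp (-(t*h))"
    by (simp add: right_diff_distrib exp_add[symmetric])
  show ?thesis unfolding 1 2 sinh_field_def by (simp add: algebra_simps)
qed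

lemma powr_inv_exp: "(b::real) > 0 \<Longrightarrow> b powr (1/t) = exp (ln b / t)"
  by (simp add: powr_def)

lemma psi_ne: "z \<noteq> 0 \<Longrightarrow> psi z = ln (sinh z / z)"
  by (simp add: psi_def S_def)

lemma sinh_div_pos: "z \<noteq> (0::real) \<Longrightarrow> sinh z / z > 0"
  using S_pos[of z] by (simp add: S_def)


lemma rep:
  fixes c h r s :: real
  assumes h: "h > 0"
  shows "ext_mean r s (exp (c - h)) (exp (c + h)) = exp (c + h * P (r*h) (s*h))"
proof -
  let ?x = "exp (c - h)" and ?y = "exp (c + h)"
  have xy: "?x \<noteq> ?y" using h by simp
  have px: "?x powr t = exp (t*(c-h))" for t by (simp add: powr_exp' mult.commute)
  have py: "?y powr t = exp (t*(c+h))" for t by (simp add: powr_exp' mult.commute)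
  have lxy: "ln ?y - ln ?x = 2 * h" by simp
  show ?thesis
  proof (cases "r \<noteq> 0 \<and> s \<noteq> 0 \<and> r \<noteq> s")
    case True
    then have r: "r \<noteq> 0" and s: "s \<noteq> 0" and rs: "r \<noteq> s" by auto
    have rh: "r*h \<noteq> 0" "s*h \<noteq> 0" using r s h by auto
    have sr: "sinh (r*h) \<noteq> 0" using rh by simp
    have B: "(r / s) * ((?y powr s - ?x powr s) / (?y powr r - ?x powr r))
        = exp ((s - r) * c) * ((sinh (s*h) / (s*h)) / (sinh (r*h) / (r*h)))"
    proof -
      have ee: "exp (s*c) = exp (r*c) * exp ((s - r) * c)" by (simp add: exp_add[symmetric] algebra_simps)
      show ?thesis
        unfolding px py ediff ee using h r s sr
        by (simp add: field_simps)
    qed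
    have pos: "(sinh (s*h) / (s*h)) / (sinh (r*h) / (r*h)) > 0"
      using divide_pos_pos[OF sinh_div_pos[OF rh(2)] sinh_div_pos[OF rh(1)]] .
    have "ext_mean r s ?x ?y = ((r / s) * ((?y powr s - ?x powr s) / (?y powr r - ?x powr r))) powr (1 / (s - r))"
      unfolding ext_mean_def by (simp only: if_not_P[OF xy] if_P[OF True])
    also have "\<dots> = (exp ((s - r) * c) * ((sinh (s*h) / (s*h)) / (sinh (r*h) / (r*h)))) powr (1 / (s - r))"
      unfolding B ..
    also have "\<dots> = exp ((ln (exp ((s - r) * c) * ((sinh (s*h) / (s*h)) / (sinh (r*h) / (r*h))))) / (s - r))"
      by (rule powr_inv_exp) (rule mult_pos_pos[OF exp_gt_zero pos])
    also have "ln (exp ((s - r) * c) * ((sinh (s*h) / (s*h)) / (sinh (r*h) / (r*h))))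
        = (s - r) * c + (psi (s*h) - psi (r*h))"
      unfolding psi_ne[OF rh(1)] psi_ne[OF rh(2)]
      by (simp only: ln_mult_pos[OF exp_gt_zero pos] ln_divide_pos[OF sinh_div_pos[OF rh(2)] sinh_div_pos[OF rh(1)]] ln_exp)
    also have "((s - r) * c + (psi (s*h) - psi (r*h))) / (s - r) = c + h * P (r*h) (s*h)"
      using rs h by (simp add: P_def field_simps)
    finally show ?thesis .
  next
    case nt: False
    show ?thesis
    proof (cases "r \<noteq> 0 \<and> s = 0")
      case True
      then have r: "r \<noteq> 0" and s: "s = 0" by auto
      have rh: "r*h \<noteq> 0" using r h by auto
      have B: "(1 / r) * ((?y powr r - ?x powr r) / (ln ?y - ln ?x)) = exp (r*c) * (sinh (r*h) / (r*h))"
        unfolding px py ediff lxy using h r by (simp add: field_simps)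
      have "ext_mean r s ?x ?y = ((1 / r) * ((?y powr r - ?x powr r) / (ln ?y - ln ?x))) powr (1 / r)"
        unfolding ext_mean_def by (simp only: if_not_P[OF xy] if_not_P[OF nt] if_P[OF True])
      also have "\<dots> = (exp (r*c) * (sinh (r*h) / (r*h))) powr (1 / r)"
        unfolding B ..
      also have "\<dots> = exp (ln (exp (r*c) * (sinh (r*h) / (r*h))) / r)"
        by (rule powr_inv_exp) (rule mult_pos_pos[OF exp_gt_zero sinh_div_pos[OF rh]])
      also have "ln (exp (r*c) * (sinh (r*h) / (r*h))) = r * c + psi (r*h)"
        unfolding psi_ne[OF rh] by (simp only: ln_mult_pos[OF exp_gt_zero sinh_div_pos[OF rh]] ln_exp)
      also have "(r * c + psi (r*h)) / r = c + h * P (r*h) (s*h)"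
        using r h s by (simp add: P_def field_simps psi_def S_def)
      finally show ?thesis .
    next
      case nt2: False
      show ?thesis
      proof (cases "r = 0 \<and> s \<noteq> 0")
        case True
        then have s: "s \<noteq> 0" and r: "r = 0" by auto
        have sh: "s*h \<noteq> 0" using s h by auto
        have B: "(1 / s) * ((?y powr s - ?x powr s) / (ln ?y - ln ?x)) = exp (s*c) * (sinh (s*h) / (s*h))"
          unfolding px py ediff lxy using h s by (simp add: field_simps)
        have "ext_mean r s ?x ?y = ((1 / s) * ((?y powr s - ?x powr s) / (ln ?y - ln ?x))) powr (1 / s)"
          unfolding ext_mean_def by (simp only: if_not_P[OF xy] if_not_P[OF nt] if_not_P[OF nt2] if_P[OF True])
        also have "\<dots> = (exp (s*c) * (sinh (s*h) / (s*h))) powr (1 / s)"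
          unfolding B ..
        also have "\<dots> = exp (ln (exp (s*c) * (sinh (s*h) / (s*h))) / s)"
          by (rule powr_inv_exp) (rule mult_pos_pos[OF exp_gt_zero sinh_div_pos[OF sh]])
        also have "ln (exp (s*c) * (sinh (s*h) / (s*h))) = s * c + psi (s*h)"
          unfolding psi_ne[OF sh] by (simp only: ln_mult_pos[OF exp_gt_zero sinh_div_pos[OF sh]] ln_exp)
        also have "(s * c + psi (s*h)) / s = c + h * P (r*h) (s*h)"
          using r h s by (simp add: P_def field_simps psi_def S_def)
        finally show ?thesis .
      next
        case nt3: False
        show ?thesis
        proof (cases "r = s \<and> r \<noteq> 0")
          case True
          then have rs: "s = r" and r: "r \<noteq> 0" by auto
          have rh: "r*h \<noteq> 0" using r h by auto
          define A where "A = exp (r*(c-h))"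
          define B where "B = exp (r*(c+h))"
          define Eh where "Eh = exp (r*h)"
          have Eh: "Eh > 0" "Eh \<noteq> 1" using rh by (auto simp: Eh_def)
          have AB: "A = exp (r*c) / Eh" "B = exp (r*c) * Eh"
            by (auto simp: A_def B_def Eh_def exp_add[symmetric] exp_diff[symmetric] algebra_simps)
          have ABne: "A - B \<noteq> 0"
          proof
            assume "A - B = 0"
            then have "exp (r*c) / Eh = exp (r*c) * Eh" using AB by simp
            then have "Eh * Eh = 1" using Eh by (simp add: field_simps)
            then have "(Eh - 1) * (Eh + 1) = 0" by (simp add: algebra_simps)
            then show False using Eh by simp
          qed
          have q: "?x powr (?x powr r) / ?y powr (?y powr r) = exp (A*(c-h) - B*(c+h))"
            unfolding px py A_def B_def by (simp add: exp_diff)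
          have "ext_mean r s ?x ?y = exp (- 1 / r) * ((?x powr (?x powr r) / ?y powr (?y powr r)) powr (1 / (?x powr r - ?y powr r)))"
            unfolding ext_mean_def by (simp only: if_not_P[OF xy] if_not_P[OF nt] if_not_P[OF nt2] if_not_P[OF nt3] if_P[OF True])
          also have "\<dots> = exp (- 1 / r) * (exp (A*(c-h) - B*(c+h)) powr (1 / (A - B)))"
            unfolding q by (simp add: px py A_def B_def)
          also have "\<dots> = exp (- 1 / r + (A*(c-h) - B*(c+h)) / (A - B))"
            by (simp add: powr_exp' exp_add[symmetric])
          also have "(A*(c-h) - B*(c+h)) / (A - B) = c + h * (Eh + 1/Eh) / (Eh - 1/Eh)"
            using ABne Eh unfolding AB by (simp add: field_simps)
          also have "Eh + 1/Eh = 2 * cosh (r*h)" by (simp add: Eh_def cosh_field_def exp_minus field_simps)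
          also have "Eh - 1/Eh = 2 * sinh (r*h)" by (simp add: Eh_def sinh_field_def exp_minus field_simps)
          finally show ?thesis using rs rh r h by (simp add: P_def Dp_def field_simps)
        next
          case False
          with nt nt2 nt3 have r: "r = 0" "s = 0" by auto
          have "ext_mean r s ?x ?y = sqrt (?x * ?y)"
            unfolding ext_mean_def by (simp only: if_not_P[OF xy] if_not_P[OF nt] if_not_P[OF nt2] if_not_P[OF nt3] if_not_P[OF False])
          also have "?x * ?y = exp c ^ 2"
            by (simp add: exp_add[symmetric] power2_eq_square)
          finally show ?thesis using r by (simp add: P_def Dp_def)
        qed
      qed
    qed
  qed
qed


lemma schur_P:
  assumes "0 \<le> u" "0 \<le> v" "0 \<le> u'" "0 \<le> v'" "u + v = u' + v'" "max u v \<le> max u' v'"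
  shows "P u' v' \<le> P u v"
proof -
  define m where "m = (u + v) / 2"
  define d where "d = \<bar>u - v\<bar> / 2"
  define d' where "d' = \<bar>u' - v'\<bar> / 2"
  have q1: "m - d = min u v" "m + d = max u v"
    unfolding m_def d_def by (auto simp: abs_if min_def max_def field_simps)
  have q2: "m - d' = min u' v'" "m + d' = max u' v'"
    unfolding m_def d'_def using assms(5) by (auto simp: abs_if min_def max_def field_simps)
  have e1: "P u v = P (m - d) (m + d)"
    unfolding q1 by (cases "u \<le> v") (auto simp: P_sym min_def max_def)
  have e2: "P u' v' = P (m - d') (m + d')"
    unfolding q2 by (cases "u' \<le> v'") (auto simp: P_sym min_def max_def)
  have "0 \<le> d" "d \<le> d'" "d' \<le> m"
    using assms unfolding m_def d_def d'_def by (auto simp: max_def abs_if)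
  from key[OF this] show ?thesis unfolding e1 e2 .
qed

lemma swap_div: "((a::real) - b) / (c - d) = (b - a) / (d - c)"
  by (metis minus_diff_eq minus_divide_divide)

lemma powr_inv_swap:
  fixes p a b :: real assumes "p > 0"
  shows "(inverse p) powr (1 / (b - a)) = p powr (1 / (a - b))"
proof -
  have "1 / (b - a) * ln (inverse p) = 1 / (a - b) * ln p"
    using assms by (simp add: ln_inverse ln_div divide_simps) (simp add: algebra_simps)
  then show ?thesis using assms by (simp add: powr_def)
qed

lemma ext_sym:
  assumes "x > 0" "y > 0"
  shows "ext_mean r s x y = ext_mean r s y x"
proof (cases "x = y")
  case True then show ?thesis by simp
next
  case False
  then have F2: "y \<noteq> x" by simp
  have a: "(y powr s - x powr s) / (y powr r - x powr r) = (x powr s - y powr s) / (x powr r - y powr r)"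
    by (rule swap_div)
  have b: "(y powr t - x powr t) / (ln y - ln x) = (x powr t - y powr t) / (ln x - ln y)" for t
    by (rule swap_div)
  have c: "(x powr (x powr r) / y powr (y powr r)) powr (1 / (x powr r - y powr r))
     = (y powr (y powr r) / x powr (x powr r)) powr (1 / (y powr r - x powr r))"
  proof -
    have pos: "x powr (x powr r) / y powr (y powr r) > 0" using assms by simp
    have "(y powr (y powr r) / x powr (x powr r)) = inverse (x powr (x powr r) / y powr (y powr r))"
      by simp
    then show ?thesis using powr_inv_swap[OF pos, of "y powr r" "x powr r"] by simp
  qed
  show ?thesis unfolding ext_mean_def
    by (simp only: if_not_P[OF False] if_not_P[OF F2] a b c mult.commute[of x y])
qed

lemma ext_repr:
  assumes "x > 0" "y > 0" "x \<noteq> y"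
  obtains c h where "h > 0" "\<And>r s. ext_mean r s x y = exp (c + h * P (r*h) (s*h))"
proof -
  have gen: "\<exists>c h. h > 0 \<and> (\<forall>r s. ext_mean r s a b = exp (c + h * P (r*h) (s*h)))"
    if ab: "0 < a" "a < b" for a b :: real
  proof -
    define c where "c = (ln a + ln b) / 2"
    define h where "h = (ln b - ln a) / 2"
    have h: "h > 0" using ab by (simp add: h_def)
    have "c - h = ln a" "c + h = ln b" by (simp_all add: c_def h_def field_simps)
    then have "exp (c - h) = a" "exp (c + h) = b" using ab by simp_all
    then show ?thesis using rep[OF h, of _ _ c] h by metis
  qed
  show ?thesis
  proof (cases "x < y")
    case True then show ?thesis using gen[OF assms(1) True] that by blast
  next
    case False
    with assms have "y < x" by simp
    from gen[OF assms(2) this] obtain c h where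
      "h > 0" "\<forall>r s. ext_mean r s y x = exp (c + h * P (r*h) (s*h))" by blast
    then show ?thesis using that ext_sym[OF assms(1,2)] by metis
  qed
qed

lemma maxh: "(h::real) > 0 \<Longrightarrow> max (a*h) (b*h) = max a b * h"
  by (cases "a \<le> b") (auto simp: max_def)

lemma maxnh: "(h::real) > 0 \<Longrightarrow> max (- (a*h)) (- (b*h)) = - (min a b * h)"
  by (cases "a \<le> b") (auto simp: max_def min_def)

theorem theorem2:
  fixes x y :: real
  assumes "x > 0" and "y > 0"
  shows "schur_concave_on {0..} (\<lambda>r s. ext_mean r s x y)
     \<and> schur_convex_on {..0} (\<lambda>r s. ext_mean r s x y)"
proof (cases "x = y")
  case True
  have e: "ext_mean r s x y = x" for r s using True by (simp add: ext_mean_def)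
  show ?thesis
    unfolding schur_concave_on_def schur_convex_on_def e by simp
next
  case False
  obtain c h where
    h: "h > 0" and E0: "\<forall>r s. ext_mean r s x y = exp (c + h * P (r*h) (s*h))"
    by (rule ext_repr[OF assms False]) (rule that, assumption, blast)
  have E: "ext_mean r s x y = exp (c + h * P (r*h) (s*h))" for r s using E0 by blast
  have conc: "ext_mean r' s' x y \<le> ext_mean r s x y"
    if "0 \<le> r" "0 \<le> s" "0 \<le> r'" "0 \<le> s'" "majorized2 (r, s) (r', s')" for r s r' s'
  proof -
    have m: "r + s = r' + s'" "max r s \<le> max r' s'" using that(5) by (auto simp: majorized2_def)
    have "P (r'*h) (s'*h) \<le> P (r*h) (s*h)"
    proof (rule schur_P)
      have "(r+s)*h = (r'+s')*h" using m by simp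
      then show "r*h + s*h = r'*h + s'*h" by (simp add: algebra_simps)
      show "max (r*h) (s*h) \<le> max (r'*h) (s'*h)"
        unfolding maxh[OF h] using m h by (intro mult_right_mono) auto
    qed (use that h in auto)
    then have "h * P (r'*h) (s'*h) \<le> h * P (r*h) (s*h)" using h by (simp add: mult_left_mono)
    then show ?thesis unfolding E by simp
  qed
  have conv: "ext_mean r s x y \<le> ext_mean r' s' x y"
    if "r \<le> 0" "s \<le> 0" "r' \<le> 0" "s' \<le> 0" "majorized2 (r, s) (r', s')" for r s r' s'
  proof -
    have m: "r + s = r' + s'" "max r s \<le> max r' s'" using that(5) by (auto simp: majorized2_def)
    have "P (- (r'*h)) (- (s'*h)) \<le> P (- (r*h)) (- (s*h))"
    proof (rule schur_P)
      have "(r+s)*h = (r'+s')*h" using m by simp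
      then show "- (r*h) + - (s*h) = - (r'*h) + - (s'*h)" by (simp add: algebra_simps)
      have "min r' s' \<le> min r s" using m by (auto simp: max_def min_def)
      then show "max (- (r*h)) (- (s*h)) \<le> max (- (r'*h)) (- (s'*h))"
        unfolding maxnh[OF h] using h by (simp add: mult_right_mono)
    qed (use that h in \<open>auto simp: mult_nonpos_nonneg\<close>)
    moreover have "P (- (r'*h)) (- (s'*h)) = - P (r'*h) (s'*h)" by (rule P_odd)
    moreover have "P (- (r*h)) (- (s*h)) = - P (r*h) (s*h)" by (rule P_odd)
    ultimately have "P (r*h) (s*h) \<le> P (r'*h) (s'*h)" by linarith
    then have "h * P (r*h) (s*h) \<le> h * P (r'*h) (s'*h)" using h by (simp add: mult_left_mono)
    then show ?thesis unfolding E by simp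
  qed
  show ?thesis
    unfolding schur_concave_on_def schur_convex_on_def
  proof (intro conjI ballI impI)
    fix r s r' s' :: real
    assume "r \<in> {0..}" "s \<in> {0..}" "r' \<in> {0..}" "s' \<in> {0..}" "majorized2 (r, s) (r', s')"
    then show "- ext_mean r s x y \<le> - ext_mean r' s' x y" using conc[of r s r' s'] by simp
  next
    fix r s r' s' :: real
    assume "r \<in> {..0}" "s \<in> {..0}" "r' \<in> {..0}" "s' \<in> {..0}" "majorized2 (r, s) (r', s')"
    then show "ext_mean r s x y \<le> ext_mean r' s' x y" using conv[of r s r' s'] by simp
  qed
qed

end
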